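(* Let $M$ be a finite $\Sigma$-Rickart right $R$-module and $P$ a simple right $R$-module with $\mathrm{Hom}_R(M,P)=0$. Then $M^{(\ell)}\oplus P^{(n)}$ is a finite $\Sigma$-Rickart module for all integers $\ell,n>0$.
   Context: $M^{(n)}$ is the direct sum of $n$ copies of $M$. $M$ is Rickart if $\ker\varphi$ is a direct summand of $M$ for all $\varphi\in\mathrm{End}_R(M)$; $M$ is finite $\Sigma$-Rickart if $M^{(n)}$ is Rickart for all $n>0$. *)

theory Defs
  imports "HOL-Algebra.Ring"
begin

record ('r, 'a) rmod =
  mcarrier :: "'a set"
  madd :: "'a \<Rightarrow> 'a \<Rightarrow> 'a"
  mzero :: 'a
  msmult :: "'a \<Rightarrow> 'r \<Rightarrow> 'a"

definition right_module :: "('r, 'b) ring_scheme \<Rightarrow> ('r, 'a) rmod \<Rightarrow> bool" where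
  "right_module R M \<longleftrightarrow> ring R \<and>
     mzero M \<in> mcarrier M \<and>
     (\<forall>x\<in>mcarrier M. \<forall>y\<in>mcarrier M. madd M x y \<in> mcarrier M) \<and>
     (\<forall>x\<in>mcarrier M. \<forall>y\<in>mcarrier M. \<forall>z\<in>mcarrier M.
        madd M (madd M x y) z = madd M x (madd M y z)) \<and>
     (\<forall>x\<in>mcarrier M. \<forall>y\<in>mcarrier M. madd M x y = madd M y x) \<and>
     (\<forall>x\<in>mcarrier M. madd M (mzero M) x = x) \<and>
     (\<forall>x\<in>mcarrier M. \<exists>y\<in>mcarrier M. madd M x y = mzero M) \<and>
     (\<forall>x\<in>mcarrier M. \<forall>r\<in>carrier R. msmult M x r \<in> mcarrier M) \<and>
     (\<forall>x\<in>mcarrier M. \<forall>y\<in>mcarrier M. \<forall>r\<in>carrier R.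
        msmult M (madd M x y) r = madd M (msmult M x r) (msmult M y r)) \<and>
     (\<forall>x\<in>mcarrier M. \<forall>r\<in>carrier R. \<forall>s\<in>carrier R.
        msmult M x (r \<oplus>\<^bsub>R\<^esub> s) = madd M (msmult M x r) (msmult M x s)) \<and>
     (\<forall>x\<in>mcarrier M. \<forall>r\<in>carrier R. \<forall>s\<in>carrier R.
        msmult M x (r \<otimes>\<^bsub>R\<^esub> s) = msmult M (msmult M x r) s) \<and>
     (\<forall>x\<in>mcarrier M. msmult M x \<one>\<^bsub>R\<^esub> = x)"

definition submodule :: "('r, 'b) ring_scheme \<Rightarrow> ('r, 'a) rmod \<Rightarrow> 'a set \<Rightarrow> bool" where
  "submodule R M N \<longleftrightarrow> N \<subseteq> mcarrier M \<and> mzero M \<in> N \<and>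
     (\<forall>x\<in>N. \<forall>y\<in>N. madd M x y \<in> N) \<and>
     (\<forall>x\<in>N. \<forall>r\<in>carrier R. msmult M x r \<in> N)"

definition mhom :: "('r, 'b) ring_scheme \<Rightarrow> ('r, 'a) rmod \<Rightarrow> ('r, 'c) rmod \<Rightarrow> ('a \<Rightarrow> 'c) \<Rightarrow> bool" where
  "mhom R M P f \<longleftrightarrow> f \<in> mcarrier M \<rightarrow> mcarrier P \<and>
     (\<forall>x\<in>mcarrier M. \<forall>y\<in>mcarrier M. f (madd M x y) = madd P (f x) (f y)) \<and>
     (\<forall>x\<in>mcarrier M. \<forall>r\<in>carrier R. f (msmult M x r) = msmult P (f x) r)"

definition mker :: "('r, 'a) rmod \<Rightarrow> ('r, 'c) rmod \<Rightarrow> ('a \<Rightarrow> 'c) \<Rightarrow> 'a set" where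
  "mker M P f = {x \<in> mcarrier M. f x = mzero P}"

definition direct_summand :: "('r, 'b) ring_scheme \<Rightarrow> ('r, 'a) rmod \<Rightarrow> 'a set \<Rightarrow> bool" where
  "direct_summand R M K \<longleftrightarrow> submodule R M K \<and>
     (\<exists>N. submodule R M N \<and> K \<inter> N = {mzero M} \<and>
          (\<forall>x\<in>mcarrier M. \<exists>a\<in>K. \<exists>b\<in>N. x = madd M a b))"

definition rickart :: "('r, 'b) ring_scheme \<Rightarrow> ('r, 'a) rmod \<Rightarrow> bool" where
  "rickart R M \<longleftrightarrow> (\<forall>f. mhom R M M f \<longrightarrow> direct_summand R M (mker M M f))"

text \<open>Direct sum M^(n) of n copies of M, realised as functions nat \<Rightarrow> 'a vanishing outside {..<n}.\<close>
definition dpow :: "('r, 'a) rmod \<Rightarrow> nat \<Rightarrow> ('r, nat \<Rightarrow> 'a) rmod" where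
  "dpow M n = \<lparr> mcarrier = {x. (\<forall>i<n. x i \<in> mcarrier M) \<and> (\<forall>i\<ge>n. x i = mzero M)},
               madd = (\<lambda>x y i. madd M (x i) (y i)),
               mzero = (\<lambda>i. mzero M),
               msmult = (\<lambda>x r i. msmult M (x i) r) \<rparr>"

definition dsum :: "('r, 'a) rmod \<Rightarrow> ('r, 'c) rmod \<Rightarrow> ('r, 'a \<times> 'c) rmod" where
  "dsum M P = \<lparr> mcarrier = mcarrier M \<times> mcarrier P,
               madd = (\<lambda>x y. (madd M (fst x) (fst y), madd P (snd x) (snd y))),
               mzero = (mzero M, mzero P),
               msmult = (\<lambda>x r. (msmult M (fst x) r, msmult P (snd x) r)) \<rparr>"

definition finite_sigma_rickart :: "('r, 'b) ring_scheme \<Rightarrow> ('r, 'a) rmod \<Rightarrow> bool" where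
  "finite_sigma_rickart R M \<longleftrightarrow> (\<forall>n>0. rickart R (dpow M n))"

definition simple_module :: "('r, 'b) ring_scheme \<Rightarrow> ('r, 'a) rmod \<Rightarrow> bool" where
  "simple_module R P \<longleftrightarrow> right_module R P \<and> mcarrier P \<noteq> {mzero P} \<and>
     (\<forall>N. submodule R P N \<longrightarrow> N = {mzero P} \<or> N = mcarrier P)"

end

theory Submission
  imports Defs
begin


lemma rm_D:
  assumes "right_module R M"
  shows "ring R" "mzero M \<in> mcarrier M"
    "\<forall>x\<in>mcarrier M. \<forall>y\<in>mcarrier M. madd M x y \<in> mcarrier M"
    "\<forall>x\<in>mcarrier M. \<forall>y\<in>mcarrier M. \<forall>z\<in>mcarrier M.
        madd M (madd M x y) z = madd M x (madd M y z)"
    "\<forall>x\<in>mcarrier M. \<forall>y\<in>mcarrier M. madd M x y = madd M y x"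
    "\<forall>x\<in>mcarrier M. madd M (mzero M) x = x"
    "\<forall>x\<in>mcarrier M. \<exists>y\<in>mcarrier M. madd M x y = mzero M"
    "\<forall>x\<in>mcarrier M. \<forall>r\<in>carrier R. msmult M x r \<in> mcarrier M"
    "\<forall>x\<in>mcarrier M. \<forall>y\<in>mcarrier M. \<forall>r\<in>carrier R.
        msmult M (madd M x y) r = madd M (msmult M x r) (msmult M y r)"
    "\<forall>x\<in>mcarrier M. \<forall>r\<in>carrier R. \<forall>s\<in>carrier R.
        msmult M x (r \<oplus>\<^bsub>R\<^esub> s) = madd M (msmult M x r) (msmult M x s)"
    "\<forall>x\<in>mcarrier M. \<forall>r\<in>carrier R. \<forall>s\<in>carrier R.
        msmult M x (r \<otimes>\<^bsub>R\<^esub> s) = msmult M (msmult M x r) s"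
    "\<forall>x\<in>mcarrier M. msmult M x \<one>\<^bsub>R\<^esub> = x"
  using assms unfolding right_module_def by (auto simp only:)

lemma rm_ring: "right_module R M \<Longrightarrow> ring R"
  by (rule rm_D(1))

lemma rm_zero: "right_module R M \<Longrightarrow> mzero M \<in> mcarrier M"
  by (rule rm_D(2))

lemma rm_add: "right_module R M \<Longrightarrow> x \<in> mcarrier M \<Longrightarrow> y \<in> mcarrier M \<Longrightarrow> madd M x y \<in> mcarrier M"
  using rm_D(3) by blast

lemma rm_assoc: "right_module R M \<Longrightarrow> x \<in> mcarrier M \<Longrightarrow> y \<in> mcarrier M \<Longrightarrow> z \<in> mcarrier M \<Longrightarrow>
  madd M (madd M x y) z = madd M x (madd M y z)"
  using rm_D(4) by blast

lemma rm_comm: "right_module R M \<Longrightarrow> x \<in> mcarrier M \<Longrightarrow> y \<in> mcarrier M \<Longrightarrow> madd M x y = madd M y x"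
  using rm_D(5) by blast

lemma rm_lzero: "right_module R M \<Longrightarrow> x \<in> mcarrier M \<Longrightarrow> madd M (mzero M) x = x"
  using rm_D(6) by blast

lemma rm_rzero: "right_module R M \<Longrightarrow> x \<in> mcarrier M \<Longrightarrow> madd M x (mzero M) = x"
  using rm_comm[of R M x "mzero M"] rm_lzero[of R M x] rm_zero[of R M] by simp

lemma rm_inv: "right_module R M \<Longrightarrow> x \<in> mcarrier M \<Longrightarrow> \<exists>y\<in>mcarrier M. madd M x y = mzero M"
  using rm_D(7) by blast

lemma rm_smult: "right_module R M \<Longrightarrow> x \<in> mcarrier M \<Longrightarrow> r \<in> carrier R \<Longrightarrow> msmult M x r \<in> mcarrier M"
  using rm_D(8) by blast

lemma rm_sdistl: "right_module R M \<Longrightarrow> x \<in> mcarrier M \<Longrightarrow> y \<in> mcarrier M \<Longrightarrow> r \<in> carrier R \<Longrightarrow>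
  msmult M (madd M x y) r = madd M (msmult M x r) (msmult M y r)"
  using rm_D(9) by blast

lemma rm_sdistr: "right_module R M \<Longrightarrow> x \<in> mcarrier M \<Longrightarrow> r \<in> carrier R \<Longrightarrow> s \<in> carrier R \<Longrightarrow>
  msmult M x (r \<oplus>\<^bsub>R\<^esub> s) = madd M (msmult M x r) (msmult M x s)"
  using rm_D(10) by blast

lemma rm_sone: "right_module R M \<Longrightarrow> x \<in> mcarrier M \<Longrightarrow> msmult M x \<one>\<^bsub>R\<^esub> = x"
  using rm_D(12) by blast

lemma rm_cancel:
  assumes M: "right_module R M" and a: "a \<in> mcarrier M" and b: "b \<in> mcarrier M" and c: "c \<in> mcarrier M"
    and e: "madd M a b = madd M a c"
  shows "b = c"
proof -
  obtain y where y: "y \<in> mcarrier M" "madd M a y = mzero M" using rm_inv[OF M a] by blast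
  have ya: "madd M y a = mzero M" using y rm_comm[OF M a y(1)] by simp
  have "b = madd M (madd M y a) b" using ya rm_lzero[OF M b] by simp
  also have "\<dots> = madd M y (madd M a b)" using rm_assoc[OF M y(1) a b] .
  also have "\<dots> = madd M y (madd M a c)" using e by simp
  also have "\<dots> = madd M (madd M y a) c" using rm_assoc[OF M y(1) a c] by simp
  also have "\<dots> = c" using ya rm_lzero[OF M c] by simp
  finally show ?thesis .
qed

lemma rm_zero_unique:
  assumes M: "right_module R M" and a: "a \<in> mcarrier M" and b: "b \<in> mcarrier M" and e: "madd M a b = a"
  shows "b = mzero M"
  using rm_cancel[OF M a b rm_zero[OF M]] e rm_rzero[OF M a] by simp

lemma rm_smult_zeroR:
  assumes M: "right_module R M" and x: "x \<in> mcarrier M"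
  shows "msmult M x \<zero>\<^bsub>R\<^esub> = mzero M"
proof -
  interpret ring R using rm_ring[OF M] .
  have "msmult M x \<zero>\<^bsub>R\<^esub> = msmult M x (\<zero>\<^bsub>R\<^esub> \<oplus>\<^bsub>R\<^esub> \<zero>\<^bsub>R\<^esub>)" by simp
  also have "\<dots> = madd M (msmult M x \<zero>\<^bsub>R\<^esub>) (msmult M x \<zero>\<^bsub>R\<^esub>)"
    by (rule rm_sdistr[OF M x zero_closed zero_closed])
  finally have "madd M (msmult M x \<zero>\<^bsub>R\<^esub>) (msmult M x \<zero>\<^bsub>R\<^esub>) = msmult M x \<zero>\<^bsub>R\<^esub>" by simp
  then show ?thesis by (rule rm_zero_unique[OF M rm_smult[OF M x zero_closed] rm_smult[OF M x zero_closed]])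
qed

lemma rm_zero_smult:
  assumes M: "right_module R M" and r: "r \<in> carrier R"
  shows "msmult M (mzero M) r = mzero M"
proof -
  have z: "mzero M \<in> mcarrier M" using rm_zero[OF M] .
  have "msmult M (madd M (mzero M) (mzero M)) r = madd M (msmult M (mzero M) r) (msmult M (mzero M) r)"
    using rm_sdistl[OF M z z r] .
  then have "madd M (msmult M (mzero M) r) (msmult M (mzero M) r) = msmult M (mzero M) r"
    using rm_lzero[OF M z] by simp
  then show ?thesis by (rule rm_zero_unique[OF M rm_smult[OF M z r] rm_smult[OF M z r]])
qed

lemma ring_neg1: "ring R \<Longrightarrow> \<ominus>\<^bsub>R\<^esub> \<one>\<^bsub>R\<^esub> \<in> carrier R"
proof -
  assume "ring R" then interpret ring R .
  show ?thesis by simp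
qed

definition mneg :: "('r, 'b) ring_scheme \<Rightarrow> ('r, 'a) rmod \<Rightarrow> 'a \<Rightarrow> 'a" where
  "mneg R M x = msmult M x (\<ominus>\<^bsub>R\<^esub> \<one>\<^bsub>R\<^esub>)"

lemma rm_neg_closed: "right_module R M \<Longrightarrow> x \<in> mcarrier M \<Longrightarrow> mneg R M x \<in> mcarrier M"
  unfolding mneg_def by (rule rm_smult) (auto intro: ring_neg1 rm_ring)

lemma rm_neg_r:
  assumes M: "right_module R M" and x: "x \<in> mcarrier M"
  shows "madd M x (mneg R M x) = mzero M"
proof -
  interpret ring R using rm_ring[OF M] .
  have "madd M x (mneg R M x) = msmult M x (\<one>\<^bsub>R\<^esub> \<oplus>\<^bsub>R\<^esub> \<ominus>\<^bsub>R\<^esub> \<one>\<^bsub>R\<^esub>)"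
    unfolding mneg_def using rm_sdistr[OF M x, of "\<one>\<^bsub>R\<^esub>" "\<ominus>\<^bsub>R\<^esub> \<one>\<^bsub>R\<^esub>"] rm_sone[OF M x] by simp
  also have "\<dots> = msmult M x \<zero>\<^bsub>R\<^esub>" by (simp add: r_neg)
  finally show ?thesis using rm_smult_zeroR[OF M x] by simp
qed

lemma rm_neg_l: "right_module R M \<Longrightarrow> x \<in> mcarrier M \<Longrightarrow> madd M (mneg R M x) x = mzero M"
  using rm_comm[of R M x "mneg R M x"] rm_neg_closed[of R M x] rm_neg_r[of R M x] by simp

lemma rm_zero_zero: "right_module R M \<Longrightarrow> madd M (mzero M) (mzero M) = mzero M"
  by (simp add: rm_lzero rm_zero)

lemma rm_lcomm: "right_module R M \<Longrightarrow> x \<in> mcarrier M \<Longrightarrow> y \<in> mcarrier M \<Longrightarrow> z \<in> mcarrier M \<Longrightarrow>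
  madd M x (madd M y z) = madd M y (madd M x z)"
  by (simp add: rm_assoc[symmetric] rm_comm[of R M x y])

lemma rm_4:
  "right_module R M \<Longrightarrow> a \<in> mcarrier M \<Longrightarrow> b \<in> mcarrier M \<Longrightarrow> c \<in> mcarrier M \<Longrightarrow> d \<in> mcarrier M \<Longrightarrow>
   madd M (madd M a b) (madd M c d) = madd M (madd M a c) (madd M b d)"
  by (simp add: rm_assoc rm_add rm_lcomm[of R M b c d])

lemma sub_neg: "submodule R M N \<Longrightarrow> right_module R M \<Longrightarrow> x \<in> N \<Longrightarrow> mneg R M x \<in> N"
  unfolding submodule_def mneg_def using ring_neg1[OF rm_ring[of R M]] by blast

lemma sub_zero: "submodule R M N \<Longrightarrow> mzero M \<in> N" by (simp add: submodule_def)
lemma sub_add: "submodule R M N \<Longrightarrow> x \<in> N \<Longrightarrow> y \<in> N \<Longrightarrow> madd M x y \<in> N" by (simp add: submodule_def)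
lemma sub_smult: "submodule R M N \<Longrightarrow> x \<in> N \<Longrightarrow> r \<in> carrier R \<Longrightarrow> msmult M x r \<in> N" by (simp add: submodule_def)
lemma sub_carr: "submodule R M N \<Longrightarrow> x \<in> N \<Longrightarrow> x \<in> mcarrier M" by (auto simp add: submodule_def)

section \<open>Homomorphisms\<close>

lemma mhom_closed: "mhom R A B f \<Longrightarrow> x \<in> mcarrier A \<Longrightarrow> f x \<in> mcarrier B"
  by (auto simp: mhom_def)
lemma mhom_add: "mhom R A B f \<Longrightarrow> x \<in> mcarrier A \<Longrightarrow> y \<in> mcarrier A \<Longrightarrow> f (madd A x y) = madd B (f x) (f y)"
  by (auto simp: mhom_def)
lemma mhom_smult: "mhom R A B f \<Longrightarrow> x \<in> mcarrier A \<Longrightarrow> r \<in> carrier R \<Longrightarrow> f (msmult A x r) = msmult B (f x) r"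
  by (auto simp: mhom_def)

lemma mhom_zero:
  assumes A: "right_module R A" and B: "right_module R B" and f: "mhom R A B f"
  shows "f (mzero A) = mzero B"
proof -
  have z: "mzero A \<in> mcarrier A" using rm_zero[OF A] .
  have "madd B (f (mzero A)) (f (mzero A)) = f (mzero A)"
    using mhom_add[OF f z z] rm_lzero[OF A z] by simp
  then show ?thesis by (rule rm_zero_unique[OF B mhom_closed[OF f z] mhom_closed[OF f z]])
qed

lemma mhom_comp: "mhom R A B f \<Longrightarrow> mhom R B C g \<Longrightarrow> mhom R A C (g \<circ> f)"
  unfolding mhom_def by (auto simp: Pi_def)

lemma mker_sub:
  assumes A: "right_module R A" and B: "right_module R B" and f: "mhom R A B f"
  shows "submodule R A (mker A B f)"
  unfolding submodule_def mker_def
proof (intro conjI ballI)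
  fix x y assume "x \<in> {x \<in> mcarrier A. f x = mzero B}" "y \<in> {x \<in> mcarrier A. f x = mzero B}"
  then show "madd A x y \<in> {x \<in> mcarrier A. f x = mzero B}"
    using mhom_add[OF f] rm_add[OF A] rm_zero_zero[OF B] by simp
next
  fix x r assume "x \<in> {x \<in> mcarrier A. f x = mzero B}" "r \<in> carrier R"
  then show "msmult A x r \<in> {x \<in> mcarrier A. f x = mzero B}"
    using mhom_smult[OF f] rm_smult[OF A] rm_zero_smult[OF B] by simp
qed (use mhom_zero[OF A B f] rm_zero[OF A] in auto)

lemma image_sub:
  assumes A: "right_module R A" and B: "right_module R B" and f: "mhom R A B f" and N: "submodule R A N"
  shows "submodule R B (f ` N)"
  unfolding submodule_def
proof (intro conjI ballI)
  show "f ` N \<subseteq> mcarrier B" using N mhom_closed[OF f] by (auto simp: submodule_def)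
  show "mzero B \<in> f ` N" using mhom_zero[OF A B f] sub_zero[OF N] by (metis image_eqI)
next
  fix x y assume "x \<in> f ` N" "y \<in> f ` N"
  then obtain a b where "a \<in> N" "b \<in> N" "x = f a" "y = f b" by blast
  then have e: "madd B x y = f (madd A a b)" using mhom_add[OF f] sub_carr[OF N] by simp
  show "madd B x y \<in> f ` N" unfolding e using sub_add[OF N \<open>a \<in> N\<close> \<open>b \<in> N\<close>] by (rule imageI)
next
  fix x r assume "x \<in> f ` N" "r \<in> carrier R"
  then obtain a where "a \<in> N" "x = f a" by blast
  then have e: "msmult B x r = f (msmult A a r)" using mhom_smult[OF f] sub_carr[OF N] \<open>r \<in> carrier R\<close> by simp
  show "msmult B x r \<in> f ` N" unfolding e using sub_smult[OF N \<open>a \<in> N\<close> \<open>r \<in> carrier R\<close>] by (rule imageI)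
qed


lemma rm_sassoc: "right_module R M \<Longrightarrow> x \<in> mcarrier M \<Longrightarrow> r \<in> carrier R \<Longrightarrow> s \<in> carrier R \<Longrightarrow>
  msmult M x (r \<otimes>\<^bsub>R\<^esub> s) = msmult M (msmult M x r) s"
  using rm_D(11) by blast

section \<open>Direct powers and sums are modules\<close>

lemma dpow_carr: "x \<in> mcarrier (dpow M n) \<longleftrightarrow> (\<forall>i<n. x i \<in> mcarrier M) \<and> (\<forall>i\<ge>n. x i = mzero M)"
  by (simp add: dpow_def)

lemma dpow_ops[simp]:
  "madd (dpow M n) x y = (\<lambda>i. madd M (x i) (y i))"
  "mzero (dpow M n) = (\<lambda>i. mzero M)"
  "msmult (dpow M n) x r = (\<lambda>i. msmult M (x i) r)"
  by (simp_all add: dpow_def)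

lemma dpow_carr_all: "right_module R M \<Longrightarrow> x \<in> mcarrier (dpow M n) \<Longrightarrow> x i \<in> mcarrier M"
  unfolding dpow_carr by (cases "i < n") (auto simp: rm_zero)

lemma rm_dpow:
  assumes M: "right_module R M"
  shows "right_module R (dpow M n)"
  unfolding right_module_def
proof (intro conjI ballI)
  note C = dpow_carr_all[OF M]
  show "ring R" using rm_ring[OF M] .
  show "mzero (dpow M n) \<in> mcarrier (dpow M n)" unfolding dpow_carr using rm_zero[OF M] by simp
next
  fix x y assume x: "x \<in> mcarrier (dpow M n)" and y: "y \<in> mcarrier (dpow M n)"
  show "madd (dpow M n) x y \<in> mcarrier (dpow M n)"
    using x y unfolding dpow_carr by (simp add: rm_add[OF M] rm_zero_zero[OF M])
next
  fix x y z assume x: "x \<in> mcarrier (dpow M n)" and y: "y \<in> mcarrier (dpow M n)" and z: "z \<in> mcarrier (dpow M n)"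
  show "madd (dpow M n) (madd (dpow M n) x y) z = madd (dpow M n) x (madd (dpow M n) y z)"
    by (simp add: rm_assoc[OF M dpow_carr_all[OF M x] dpow_carr_all[OF M y] dpow_carr_all[OF M z]])
next
  fix x y assume x: "x \<in> mcarrier (dpow M n)" and y: "y \<in> mcarrier (dpow M n)"
  show "madd (dpow M n) x y = madd (dpow M n) y x"
    by (simp add: rm_comm[OF M dpow_carr_all[OF M x] dpow_carr_all[OF M y]])
next
  fix x assume x: "x \<in> mcarrier (dpow M n)"
  show "madd (dpow M n) (mzero (dpow M n)) x = x"
    by (simp add: rm_lzero[OF M dpow_carr_all[OF M x]])
next
  fix x assume x: "x \<in> mcarrier (dpow M n)"
  show "\<exists>y\<in>mcarrier (dpow M n). madd (dpow M n) x y = mzero (dpow M n)"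
  proof (rule bexI[where x="\<lambda>i. mneg R M (x i)"])
    show "madd (dpow M n) x (\<lambda>i. mneg R M (x i)) = mzero (dpow M n)"
      by (simp add: rm_neg_r[OF M dpow_carr_all[OF M x]])
    show "(\<lambda>i. mneg R M (x i)) \<in> mcarrier (dpow M n)"
      using x unfolding dpow_carr mneg_def
      by (simp add: rm_smult[OF M] ring_neg1[OF rm_ring[OF M]] rm_zero_smult[OF M])
  qed
next
  fix x r assume x: "x \<in> mcarrier (dpow M n)" and r: "r \<in> carrier R"
  show "msmult (dpow M n) x r \<in> mcarrier (dpow M n)"
    using x r unfolding dpow_carr by (simp add: rm_smult[OF M] rm_zero_smult[OF M])
next
  fix x y r assume x: "x \<in> mcarrier (dpow M n)" and y: "y \<in> mcarrier (dpow M n)" and r: "r \<in> carrier R"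
  show "msmult (dpow M n) (madd (dpow M n) x y) r = madd (dpow M n) (msmult (dpow M n) x r) (msmult (dpow M n) y r)"
    by (simp add: rm_sdistl[OF M dpow_carr_all[OF M x] dpow_carr_all[OF M y] r])
next
  fix x r s assume x: "x \<in> mcarrier (dpow M n)" and r: "r \<in> carrier R" and s: "s \<in> carrier R"
  show "msmult (dpow M n) x (r \<oplus>\<^bsub>R\<^esub> s) = madd (dpow M n) (msmult (dpow M n) x r) (msmult (dpow M n) x s)"
    by (simp add: rm_sdistr[OF M dpow_carr_all[OF M x] r s])
next
  fix x r s assume x: "x \<in> mcarrier (dpow M n)" and r: "r \<in> carrier R" and s: "s \<in> carrier R"
  show "msmult (dpow M n) x (r \<otimes>\<^bsub>R\<^esub> s) = msmult (dpow M n) (msmult (dpow M n) x r) s"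
    by (simp add: rm_sassoc[OF M dpow_carr_all[OF M x] r s])
next
  fix x assume x: "x \<in> mcarrier (dpow M n)"
  show "msmult (dpow M n) x \<one>\<^bsub>R\<^esub> = x"
    by (simp add: rm_sone[OF M dpow_carr_all[OF M x]])
qed

lemma dsum_carr: "x \<in> mcarrier (dsum A B) \<longleftrightarrow> fst x \<in> mcarrier A \<and> snd x \<in> mcarrier B"
  by (cases x) (simp add: dsum_def)

lemma dsum_ops[simp]:
  "madd (dsum A B) x y = (madd A (fst x) (fst y), madd B (snd x) (snd y))"
  "mzero (dsum A B) = (mzero A, mzero B)"
  "msmult (dsum A B) x r = (msmult A (fst x) r, msmult B (snd x) r)"
  by (simp_all add: dsum_def)

lemma rm_dsum:
  assumes A: "right_module R A" and B: "right_module R B"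
  shows "right_module R (dsum A B)"
  unfolding right_module_def
proof (intro conjI ballI)
  show "ring R" using rm_ring[OF A] .
  show "mzero (dsum A B) \<in> mcarrier (dsum A B)" unfolding dsum_carr using rm_zero[OF A] rm_zero[OF B] by simp
next
  fix x y assume x: "x \<in> mcarrier (dsum A B)" and y: "y \<in> mcarrier (dsum A B)"
  show "madd (dsum A B) x y \<in> mcarrier (dsum A B)"
    using x y unfolding dsum_carr by (simp add: rm_add[OF A] rm_add[OF B])
next
  fix x y z assume x: "x \<in> mcarrier (dsum A B)" and y: "y \<in> mcarrier (dsum A B)" and z: "z \<in> mcarrier (dsum A B)"
  show "madd (dsum A B) (madd (dsum A B) x y) z = madd (dsum A B) x (madd (dsum A B) y z)"
    using x y z unfolding dsum_carr by (simp add: rm_assoc[OF A] rm_assoc[OF B])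
next
  fix x y assume x: "x \<in> mcarrier (dsum A B)" and y: "y \<in> mcarrier (dsum A B)"
  show "madd (dsum A B) x y = madd (dsum A B) y x"
    using x y unfolding dsum_carr using rm_comm[OF A, of "fst x" "fst y"] rm_comm[OF B, of "snd x" "snd y"] by simp
next
  fix x assume x: "x \<in> mcarrier (dsum A B)"
  show "madd (dsum A B) (mzero (dsum A B)) x = x"
    using x unfolding dsum_carr by (simp add: rm_lzero[OF A] rm_lzero[OF B])
next
  fix x assume x: "x \<in> mcarrier (dsum A B)"
  show "\<exists>y\<in>mcarrier (dsum A B). madd (dsum A B) x y = mzero (dsum A B)"
  proof (rule bexI[where x="(mneg R A (fst x), mneg R B (snd x))"])
    show "madd (dsum A B) x (mneg R A (fst x), mneg R B (snd x)) = mzero (dsum A B)"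
      using x unfolding dsum_carr by (simp add: rm_neg_r[OF A] rm_neg_r[OF B])
    show "(mneg R A (fst x), mneg R B (snd x)) \<in> mcarrier (dsum A B)"
      using x unfolding dsum_carr by (simp add: rm_neg_closed[OF A] rm_neg_closed[OF B])
  qed
next
  fix x r assume x: "x \<in> mcarrier (dsum A B)" and r: "r \<in> carrier R"
  show "msmult (dsum A B) x r \<in> mcarrier (dsum A B)"
    using x r unfolding dsum_carr by (simp add: rm_smult[OF A] rm_smult[OF B])
next
  fix x y r assume x: "x \<in> mcarrier (dsum A B)" and y: "y \<in> mcarrier (dsum A B)" and r: "r \<in> carrier R"
  show "msmult (dsum A B) (madd (dsum A B) x y) r = madd (dsum A B) (msmult (dsum A B) x r) (msmult (dsum A B) y r)"
    using x y r unfolding dsum_carr by (simp add: rm_sdistl[OF A] rm_sdistl[OF B])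
next
  fix x r s assume x: "x \<in> mcarrier (dsum A B)" and r: "r \<in> carrier R" and s: "s \<in> carrier R"
  show "msmult (dsum A B) x (r \<oplus>\<^bsub>R\<^esub> s) = madd (dsum A B) (msmult (dsum A B) x r) (msmult (dsum A B) x s)"
    using x r s unfolding dsum_carr by (simp add: rm_sdistr[OF A] rm_sdistr[OF B])
next
  fix x r s assume x: "x \<in> mcarrier (dsum A B)" and r: "r \<in> carrier R" and s: "s \<in> carrier R"
  show "msmult (dsum A B) x (r \<otimes>\<^bsub>R\<^esub> s) = msmult (dsum A B) (msmult (dsum A B) x r) s"
    using x r s unfolding dsum_carr by (simp add: rm_sassoc[OF A] rm_sassoc[OF B])
next
  fix x assume x: "x \<in> mcarrier (dsum A B)"
  show "msmult (dsum A B) x \<one>\<^bsub>R\<^esub> = x"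
    using x unfolding dsum_carr by (simp add: rm_sone[OF A] rm_sone[OF B])
qed


section \<open>Isomorphisms\<close>

definition miso :: "('r, 'b) ring_scheme \<Rightarrow> ('r, 'a) rmod \<Rightarrow> ('r, 'c) rmod \<Rightarrow> ('a \<Rightarrow> 'c) \<Rightarrow> ('c \<Rightarrow> 'a) \<Rightarrow> bool" where
  "miso R A B f g \<longleftrightarrow> mhom R A B f \<and> mhom R B A g \<and> (\<forall>x\<in>mcarrier A. g (f x) = x) \<and> (\<forall>y\<in>mcarrier B. f (g y) = y)"

definition ssm :: "('r, 'b) ring_scheme \<Rightarrow> ('r, 'a) rmod \<Rightarrow> bool" where
  "ssm R M \<longleftrightarrow> (\<forall>T. submodule R M T \<longrightarrow> direct_summand R M T)"

lemma iso_summand: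
  assumes A: "right_module R A" and B: "right_module R B" and iso: "miso R A B f g"
    and K: "direct_summand R B K"
  shows "direct_summand R A (g ` K)"
proof -
  have f: "mhom R A B f" and g: "mhom R B A g" and gf: "\<And>x. x \<in> mcarrier A \<Longrightarrow> g (f x) = x"
    and fg: "\<And>y. y \<in> mcarrier B \<Longrightarrow> f (g y) = y" using iso by (auto simp: miso_def)
  have Ks: "submodule R B K" using K by (simp add: direct_summand_def)
  obtain W where W: "submodule R B W" "K \<inter> W = {mzero B}" "\<forall>x\<in>mcarrier B. \<exists>a\<in>K. \<exists>b\<in>W. x = madd B a b"
    using K by (auto simp: direct_summand_def)
  have g0: "g (mzero B) = mzero A" by (rule mhom_zero[OF B A g])
  have "g ` K \<inter> g ` W = {mzero A}"
  proof
    show "{mzero A} \<subseteq> g ` K \<inter> g ` W" using g0 sub_zero[OF Ks] sub_zero[OF W(1)] by (metis IntI empty_subsetI image_eqI insert_subset)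
    show "g ` K \<inter> g ` W \<subseteq> {mzero A}"
    proof
      fix z assume "z \<in> g ` K \<inter> g ` W"
      then obtain k w where k: "k \<in> K" and w: "w \<in> W" and zk: "z = g k" and zw: "z = g w" by blast
      have "k = f (g k)" using fg[OF sub_carr[OF Ks k]] by simp
      also have "\<dots> = f (g w)" using zk zw by simp
      also have "\<dots> = w" using fg[OF sub_carr[OF W(1) w]] .
      finally have "k \<in> K \<inter> W" using k w by simp
      then have "k = mzero B" using W(2) by simp
      then show "z \<in> {mzero A}" using zk g0 by simp
    qed
  qed
  moreover have "\<forall>x\<in>mcarrier A. \<exists>a\<in>g ` K. \<exists>b\<in>g ` W. x = madd A a b"
  proof
    fix x assume x: "x \<in> mcarrier A"
    obtain a b where a: "a \<in> K" and b: "b \<in> W" and e: "f x = madd B a b"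
      using W(3) mhom_closed[OF f x] by blast
    have "x = g (f x)" using gf[OF x] by simp
    also have "\<dots> = madd A (g a) (g b)" using e mhom_add[OF g sub_carr[OF Ks a] sub_carr[OF W(1) b]] by simp
    finally show "\<exists>a\<in>g ` K. \<exists>b\<in>g ` W. x = madd A a b" using a b by blast
  qed
  ultimately show ?thesis unfolding direct_summand_def
    using image_sub[OF B A g Ks] image_sub[OF B A g W(1)] by blast
qed

lemma iso_rickart:
  assumes A: "right_module R A" and B: "right_module R B" and iso: "miso R A B f g"
    and RB: "rickart R B"
  shows "rickart R A"
  unfolding rickart_def
proof (intro allI impI)
  fix h assume h: "mhom R A A h"
  have f: "mhom R A B f" and g: "mhom R B A g" and gf: "\<And>x. x \<in> mcarrier A \<Longrightarrow> g (f x) = x"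
    and fg: "\<And>y. y \<in> mcarrier B \<Longrightarrow> f (g y) = y" using iso by (auto simp: miso_def)
  have p: "mhom R B B (f \<circ> h \<circ> g)" using mhom_comp[OF mhom_comp[OF g h] f] by (simp add: comp_assoc)
  have K: "direct_summand R B (mker B B (f \<circ> h \<circ> g))" using RB p by (simp add: rickart_def)
  have "g ` mker B B (f \<circ> h \<circ> g) = mker A A h"
  proof
    show "g ` mker B B (f \<circ> h \<circ> g) \<subseteq> mker A A h"
    proof
      fix z assume "z \<in> g ` mker B B (f \<circ> h \<circ> g)"
      then obtain y where y: "y \<in> mcarrier B" "f (h (g y)) = mzero B" and z: "z = g y"
        by (auto simp: mker_def)
      have gy: "g y \<in> mcarrier A" using mhom_closed[OF g y(1)] .
      have "h (g y) = g (f (h (g y)))" using gf[OF mhom_closed[OF h gy]] by simp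
      also have "\<dots> = mzero A" using y(2) mhom_zero[OF B A g] by simp
      finally show "z \<in> mker A A h" using z gy by (simp add: mker_def)
    qed
    show "mker A A h \<subseteq> g ` mker B B (f \<circ> h \<circ> g)"
    proof
      fix x assume x: "x \<in> mker A A h"
      then have xc: "x \<in> mcarrier A" and hx: "h x = mzero A" by (auto simp: mker_def)
      have "f x \<in> mker B B (f \<circ> h \<circ> g)"
        using mhom_closed[OF f xc] gf[OF xc] hx mhom_zero[OF A B f] by (simp add: mker_def)
      moreover have "x = g (f x)" using gf[OF xc] by simp
      ultimately show "x \<in> g ` mker B B (f \<circ> h \<circ> g)" by blast
    qed
  qed
  then show "direct_summand R A (mker A A h)" using iso_summand[OF A B iso K] by simp
qed

lemma iso_ssm:
  assumes A: "right_module R A" and B: "right_module R B" and iso: "miso R A B f g"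
    and SB: "ssm R B"
  shows "ssm R A"
  unfolding ssm_def
proof (intro allI impI)
  fix T assume T: "submodule R A T"
  have f: "mhom R A B f" and gf: "\<And>x. x \<in> mcarrier A \<Longrightarrow> g (f x) = x"
    using iso by (auto simp: miso_def)
  have "direct_summand R B (f ` T)" using SB image_sub[OF A B f T] by (simp add: ssm_def)
  from iso_summand[OF A B iso this] have "direct_summand R A (g ` f ` T)" .
  moreover have "g ` f ` T = T"
  proof -
    have "g ` f ` T = (\<lambda>x. g (f x)) ` T" by (simp add: image_image)
    also have "\<dots> = T" using gf sub_carr[OF T] by (simp cong: image_cong)
    finally show ?thesis .
  qed
  ultimately show "direct_summand R A T" by simp
qed



lemma main_D:
  assumes N: "right_module R N" and Q: "right_module R Q" and RN: "rickart R N" and SQ: "ssm R Q"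
    and H: "\<forall>f. mhom R N Q f \<longrightarrow> (\<forall>x\<in>mcarrier N. f x = mzero Q)"
  shows "rickart R (dsum N Q)"
  unfolding rickart_def
proof (intro allI impI)
  fix p assume p: "mhom R (dsum N Q) (dsum N Q) p"
  have X: "right_module R (dsum N Q)" using rm_dsum[OF N Q] .
  have z0: "mzero N \<in> mcarrier N" "mzero Q \<in> mcarrier Q" using rm_zero[OF N] rm_zero[OF Q] by auto
  have inX: "\<And>x y. x \<in> mcarrier N \<Longrightarrow> y \<in> mcarrier Q \<Longrightarrow> (x, y) \<in> mcarrier (dsum N Q)"
    by (simp add: dsum_carr)
  have pc: "\<And>x y. x \<in> mcarrier N \<Longrightarrow> y \<in> mcarrier Q \<Longrightarrow> fst (p (x, y)) \<in> mcarrier N \<and> snd (p (x, y)) \<in> mcarrier Q"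
    using mhom_closed[OF p inX] by (simp add: dsum_carr)
  have padd: "\<And>x1 y1 x2 y2. x1 \<in> mcarrier N \<Longrightarrow> y1 \<in> mcarrier Q \<Longrightarrow> x2 \<in> mcarrier N \<Longrightarrow> y2 \<in> mcarrier Q \<Longrightarrow>
     p (madd N x1 x2, madd Q y1 y2) = madd (dsum N Q) (p (x1, y1)) (p (x2, y2))"
    using mhom_add[OF p inX inX] by simp
  have psm: "\<And>x y r. x \<in> mcarrier N \<Longrightarrow> y \<in> mcarrier Q \<Longrightarrow> r \<in> carrier R \<Longrightarrow>
     p (msmult N x r, msmult Q y r) = msmult (dsum N Q) (p (x, y)) r"
    using mhom_smult[OF p inX] by simp
  have p0: "p (mzero N, mzero Q) = (mzero N, mzero Q)" using mhom_zero[OF X X p] by simp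
  define a where "a x = fst (p (x, mzero Q))" for x
  define c where "c x = snd (p (x, mzero Q))" for x
  have ha: "mhom R N N a" unfolding mhom_def a_def
  proof (intro conjI ballI)
    show "(\<lambda>x. fst (p (x, mzero Q))) \<in> mcarrier N \<rightarrow> mcarrier N" using pc z0 by auto
  next
    fix x y assume "x \<in> mcarrier N" "y \<in> mcarrier N"
    then show "fst (p (madd N x y, mzero Q)) = madd N (fst (p (x, mzero Q))) (fst (p (y, mzero Q)))"
      using padd[of x "mzero Q" y "mzero Q"] z0 rm_zero_zero[OF Q] by simp
  next
    fix x r assume "x \<in> mcarrier N" "r \<in> carrier R"
    then show "fst (p (msmult N x r, mzero Q)) = msmult N (fst (p (x, mzero Q))) r"
      using psm[of x "mzero Q" r] z0 rm_zero_smult[OF Q] by simp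
  qed
  have hc: "mhom R N Q c" unfolding mhom_def c_def
  proof (intro conjI ballI)
    show "(\<lambda>x. snd (p (x, mzero Q))) \<in> mcarrier N \<rightarrow> mcarrier Q" using pc z0 by auto
  next
    fix x y assume "x \<in> mcarrier N" "y \<in> mcarrier N"
    then show "snd (p (madd N x y, mzero Q)) = madd Q (snd (p (x, mzero Q))) (snd (p (y, mzero Q)))"
      using padd[of x "mzero Q" y "mzero Q"] z0 rm_zero_zero[OF Q] by simp
  next
    fix x r assume "x \<in> mcarrier N" "r \<in> carrier R"
    then show "snd (p (msmult N x r, mzero Q)) = msmult Q (snd (p (x, mzero Q))) r"
      using psm[of x "mzero Q" r] z0 rm_zero_smult[OF Q] by simp
  qed
  have c0: "\<And>x. x \<in> mcarrier N \<Longrightarrow> c x = mzero Q" using H hc by blast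
  have pN: "\<And>x. x \<in> mcarrier N \<Longrightarrow> p (x, mzero Q) = (a x, mzero Q)"
  proof -
    fix x assume x: "x \<in> mcarrier N"
    have "p (x, mzero Q) = (fst (p (x, mzero Q)), snd (p (x, mzero Q)))" by simp
    then show "p (x, mzero Q) = (a x, mzero Q)" using c0[OF x] unfolding a_def c_def by simp
  qed
  obtain Cn where Cn: "submodule R N Cn" "mker N N a \<inter> Cn = {mzero N}"
    "\<forall>x\<in>mcarrier N. \<exists>u\<in>mker N N a. \<exists>v\<in>Cn. x = madd N u v"
  proof -
    have "direct_summand R N (mker N N a)" using RN ha by (simp add: rickart_def)
    then show ?thesis using that unfolding direct_summand_def by blast
  qed
  define T where "T = {y \<in> mcarrier Q. \<exists>x\<in>mcarrier N. p (x, y) = (mzero N, mzero Q)}"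
  have Ts: "submodule R Q T" unfolding submodule_def
  proof (intro conjI ballI)
    show "T \<subseteq> mcarrier Q" by (auto simp: T_def)
    show "mzero Q \<in> T" unfolding T_def using z0 p0 by auto
  next
    fix y1 y2 assume "y1 \<in> T" "y2 \<in> T"
    then obtain x1 x2 where a1: "y1 \<in> mcarrier Q" "x1 \<in> mcarrier N" "p (x1, y1) = (mzero N, mzero Q)"
      and a2: "y2 \<in> mcarrier Q" "x2 \<in> mcarrier N" "p (x2, y2) = (mzero N, mzero Q)"
      unfolding T_def by blast
    have "p (madd N x1 x2, madd Q y1 y2) = (mzero N, mzero Q)"
      using padd[OF a1(2) a1(1) a2(2) a2(1)] a1(3) a2(3) rm_zero_zero[OF N] rm_zero_zero[OF Q] by simp
    then show "madd Q y1 y2 \<in> T" unfolding T_def using rm_add[OF N a1(2) a2(2)] rm_add[OF Q a1(1) a2(1)] by blast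
  next
    fix y r assume "y \<in> T" "r \<in> carrier R"
    then obtain x where a1: "y \<in> mcarrier Q" "x \<in> mcarrier N" "p (x, y) = (mzero N, mzero Q)"
      unfolding T_def by blast
    have "p (msmult N x r, msmult Q y r) = (mzero N, mzero Q)"
      using psm[OF a1(2) a1(1) \<open>r \<in> carrier R\<close>] a1(3) rm_zero_smult[OF N \<open>r \<in> carrier R\<close>]
        rm_zero_smult[OF Q \<open>r \<in> carrier R\<close>] by simp
    then show "msmult Q y r \<in> T" unfolding T_def
      using rm_smult[OF N a1(2) \<open>r \<in> carrier R\<close>] rm_smult[OF Q a1(1) \<open>r \<in> carrier R\<close>] by blast
  qed
  obtain T' where T': "submodule R Q T'" "T \<inter> T' = {mzero Q}"
    "\<forall>x\<in>mcarrier Q. \<exists>u\<in>T. \<exists>v\<in>T'. x = madd Q u v"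
  proof -
    have "direct_summand R Q T" using SQ Ts by (simp add: ssm_def)
    then show ?thesis using that unfolding direct_summand_def by blast
  qed
  define W where "W = Cn \<times> T'"
  have Ws: "submodule R (dsum N Q) W" unfolding submodule_def W_def
  proof (intro conjI ballI)
    show "Cn \<times> T' \<subseteq> mcarrier (dsum N Q)" using sub_carr[OF Cn(1)] sub_carr[OF T'(1)] by (auto simp: dsum_carr)
    show "mzero (dsum N Q) \<in> Cn \<times> T'" using sub_zero[OF Cn(1)] sub_zero[OF T'(1)] by simp
  next
    fix x y assume "x \<in> Cn \<times> T'" "y \<in> Cn \<times> T'"
    then show "madd (dsum N Q) x y \<in> Cn \<times> T'" using sub_add[OF Cn(1)] sub_add[OF T'(1)] by auto
  next
    fix x r assume "x \<in> Cn \<times> T'" "r \<in> carrier R"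
    then show "msmult (dsum N Q) x r \<in> Cn \<times> T'" using sub_smult[OF Cn(1)] sub_smult[OF T'(1)] by auto
  qed
  have Ks: "submodule R (dsum N Q) (mker (dsum N Q) (dsum N Q) p)" by (rule mker_sub[OF X X p])
  have inter: "mker (dsum N Q) (dsum N Q) p \<inter> W = {mzero (dsum N Q)}"
  proof
    show "{mzero (dsum N Q)} \<subseteq> mker (dsum N Q) (dsum N Q) p \<inter> W"
      using sub_zero[OF Ks] sub_zero[OF Ws] by simp
    show "mker (dsum N Q) (dsum N Q) p \<inter> W \<subseteq> {mzero (dsum N Q)}"
    proof
      fix z assume z: "z \<in> mker (dsum N Q) (dsum N Q) p \<inter> W"
      then obtain u v where zuv: "z = (u, v)" and u: "u \<in> Cn" and v: "v \<in> T'" and pz: "p (u, v) = (mzero N, mzero Q)"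
        unfolding W_def mker_def by auto
      have uc: "u \<in> mcarrier N" using sub_carr[OF Cn(1) u] .
      have "v \<in> T" unfolding T_def using sub_carr[OF T'(1) v] uc pz by blast
      then have v0: "v = mzero Q" using v T'(2) by blast
      have "a u = mzero N" using pz pN[OF uc] v0 by simp
      then have "u \<in> mker N N a \<inter> Cn" using uc u by (simp add: mker_def)
      then have "u = mzero N" using Cn(2) by blast
      then show "z \<in> {mzero (dsum N Q)}" using zuv v0 by simp
    qed
  qed
  have span: "\<forall>z\<in>mcarrier (dsum N Q). \<exists>u\<in>mker (dsum N Q) (dsum N Q) p. \<exists>w\<in>W. z = madd (dsum N Q) u w"
  proof
    fix z assume "z \<in> mcarrier (dsum N Q)"
    then obtain x q where zxq: "z = (x, q)" and x: "x \<in> mcarrier N" and q: "q \<in> mcarrier Q"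
      by (cases z) (auto simp: dsum_carr)
    obtain t t' where t: "t \<in> T" and t': "t' \<in> T'" and qe: "q = madd Q t t'" using T'(3) q by blast
    have tc: "t \<in> mcarrier Q" and t'c: "t' \<in> mcarrier Q" using sub_carr[OF Ts t] sub_carr[OF T'(1) t'] .
    obtain x1 where x1: "x1 \<in> mcarrier N" "p (x1, t) = (mzero N, mzero Q)" using t unfolding T_def by blast
    obtain k1 c1 where k1: "k1 \<in> mker N N a" and c1: "c1 \<in> Cn" and x1e: "x1 = madd N k1 c1" using Cn(3) x1(1) by blast
    obtain k cc where k: "k \<in> mker N N a" and cc: "cc \<in> Cn" and xe: "x = madd N k cc" using Cn(3) x by blast
    have k1c: "k1 \<in> mcarrier N" "a k1 = mzero N" using k1 by (auto simp: mker_def)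
    have kc: "k \<in> mcarrier N" "a k = mzero N" using k by (auto simp: mker_def)
    have c1c: "c1 \<in> mcarrier N" using sub_carr[OF Cn(1) c1] .
    have ccc: "cc \<in> mcarrier N" using sub_carr[OF Cn(1) cc] .
    have pk1: "p (k1, mzero Q) = (mzero N, mzero Q)" using pN[OF k1c(1)] k1c(2) by simp
    have pk: "p (k, mzero Q) = (mzero N, mzero Q)" using pN[OF kc(1)] kc(2) by simp
    have "p (x1, t) = p (madd N k1 c1, madd Q (mzero Q) t)" using x1e rm_lzero[OF Q tc] by simp
    also have "\<dots> = madd (dsum N Q) (p (k1, mzero Q)) (p (c1, t))" using padd[OF k1c(1) z0(2) c1c tc] .
    also have "\<dots> = p (c1, t)" using pk1 pc[OF c1c tc] rm_lzero[OF N] rm_lzero[OF Q] by simp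
    finally have pc1: "p (c1, t) = (mzero N, mzero Q)" using x1(2) by simp
    have "p (madd N k c1, t) = p (madd N k c1, madd Q (mzero Q) t)" using rm_lzero[OF Q tc] by simp
    also have "\<dots> = madd (dsum N Q) (p (k, mzero Q)) (p (c1, t))" using padd[OF kc(1) z0(2) c1c tc] .
    also have "\<dots> = (mzero N, mzero Q)" using pk pc1 rm_zero_zero[OF N] rm_zero_zero[OF Q] by simp
    finally have m1: "(madd N k c1, t) \<in> mker (dsum N Q) (dsum N Q) p"
      using rm_add[OF N kc(1) c1c] tc by (simp add: mker_def dsum_carr)
    have m2: "(madd N cc (mneg R N c1), t') \<in> W" unfolding W_def
      using sub_add[OF Cn(1) cc sub_neg[OF Cn(1) N c1]] t' by simp
    have "madd N (madd N k c1) (madd N cc (mneg R N c1)) = madd N (madd N k cc) (madd N c1 (mneg R N c1))"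
      using rm_4[OF N kc(1) c1c ccc rm_neg_closed[OF N c1c]] .
    also have "\<dots> = x" using xe rm_neg_r[OF N c1c] rm_rzero[OF N x] by simp
    finally have "z = madd (dsum N Q) (madd N k c1, t) (madd N cc (mneg R N c1), t')"
      using zxq qe by simp
    then show "\<exists>u\<in>mker (dsum N Q) (dsum N Q) p. \<exists>w\<in>W. z = madd (dsum N Q) u w" using m1 m2 by blast
  qed
  show "direct_summand R (dsum N Q) (mker (dsum N Q) (dsum N Q) p)"
    unfolding direct_summand_def using Ks Ws inter span by blast
qed



definition single :: "('r, 'a) rmod \<Rightarrow> nat \<Rightarrow> 'a \<Rightarrow> nat \<Rightarrow> 'a" where
  "single M i a = (\<lambda>j. if j = i then a else mzero M)"

definition zap :: "('r, 'a) rmod \<Rightarrow> nat \<Rightarrow> (nat \<Rightarrow> 'a) \<Rightarrow> nat \<Rightarrow> 'a" where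
  "zap M i x = (\<lambda>j. if j = i then mzero M else x j)"

lemma decomp:
  assumes M: "right_module R M" and x: "x \<in> mcarrier (dpow M n)"
  shows "x = madd (dpow M n') (zap M i x) (single M i (x i))"
proof (rule ext)
  fix j
  have xj: "x j \<in> mcarrier M" using dpow_carr_all[OF M x] .
  show "x j = madd (dpow M n') (zap M i x) (single M i (x i)) j"
    using rm_lzero[OF M xj] rm_rzero[OF M xj] by (cases "j = i") (simp_all add: zap_def single_def)
qed

lemma zap_carr: "right_module R M \<Longrightarrow> x \<in> mcarrier (dpow M (Suc m)) \<Longrightarrow> zap M m x \<in> mcarrier (dpow M m)"
  unfolding dpow_carr zap_def by (auto simp: rm_zero)

lemma single_carr: "right_module R M \<Longrightarrow> a \<in> mcarrier M \<Longrightarrow> i < n \<Longrightarrow> single M i a \<in> mcarrier (dpow M n)"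
  unfolding dpow_carr single_def by (auto simp: rm_zero)

lemma dpow_mono: "right_module R M \<Longrightarrow> m \<le> n \<Longrightarrow> x \<in> mcarrier (dpow M m) \<Longrightarrow> x \<in> mcarrier (dpow M n)"
  unfolding dpow_carr
proof (intro conjI allI impI)
  fix i assume "right_module R M" "m \<le> n" "(\<forall>i<m. x i \<in> mcarrier M) \<and> (\<forall>i\<ge>m. x i = mzero M)" "i < n"
  then show "x i \<in> mcarrier M" by (cases "i < m") (auto simp: rm_zero)
next
  fix i assume "m \<le> n" "(\<forall>i<m. x i \<in> mcarrier M) \<and> (\<forall>i\<ge>m. x i = mzero M)" "n \<le> i"
  then show "x i = mzero M" by auto
qed

lemma single_add: "right_module R M \<Longrightarrow>
  madd (dpow M n) (single M i a) (single M i b) = single M i (madd M a b)"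
  by (rule ext) (simp add: single_def rm_zero_zero)

lemma single_smult: "right_module R M \<Longrightarrow> r \<in> carrier R \<Longrightarrow>
  msmult (dpow M n) (single M i a) r = single M i (msmult M a r)"
  by (rule ext) (simp add: single_def rm_zero_smult)

lemma single_zero: "single M i (mzero M) = mzero (dpow M n)"
  by (rule ext) (simp add: single_def)

definition hz :: "('r, 'b) ring_scheme \<Rightarrow> ('r, 'a) rmod \<Rightarrow> ('r, 'c) rmod \<Rightarrow> bool" where
  "hz R A B \<longleftrightarrow> (\<forall>f. mhom R A B f \<longrightarrow> (\<forall>x\<in>mcarrier A. f x = mzero B))"

lemma hz_right:
  assumes A: "right_module R A" and B: "right_module R B" and H: "hz R A B"
  shows "hz R A (dpow B m)"
  unfolding hz_def
proof (intro allI impI ballI)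
  fix f x assume f: "mhom R A (dpow B m) f" and x: "x \<in> mcarrier A"
  show "f x = mzero (dpow B m)"
  proof (rule ext)
    fix j
    have "mhom R A B (\<lambda>x. f x j)" unfolding mhom_def
    proof (intro conjI ballI)
      show "(\<lambda>x. f x j) \<in> mcarrier A \<rightarrow> mcarrier B" using dpow_carr_all[OF B mhom_closed[OF f]] by auto
    next
      fix x y assume "x \<in> mcarrier A" "y \<in> mcarrier A"
      then show "f (madd A x y) j = madd B (f x j) (f y j)" using mhom_add[OF f] by simp
    next
      fix x r assume "x \<in> mcarrier A" "r \<in> carrier R"
      then show "f (msmult A x r) j = msmult B (f x j) r" using mhom_smult[OF f] by simp
    qed
    then show "f x j = mzero (dpow B m) j" using H x unfolding hz_def by simp
  qed
qed

lemma hz_left: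
  assumes A: "right_module R A" and B: "right_module R B" and H: "hz R A B"
  shows "hz R (dpow A m) B"
  unfolding hz_def
proof (intro allI impI)
  fix f assume f: "mhom R (dpow A m) B f"
  have D: "right_module R (dpow A m)" using rm_dpow[OF A] .
  have "\<forall>x\<in>mcarrier (dpow A k). f x = mzero B" if "k \<le> m" for k
    using that
  proof (induction k)
    case 0
    show ?case
    proof
      fix x assume "x \<in> mcarrier (dpow A 0)"
      then have "x = mzero (dpow A m)" unfolding dpow_carr by auto
      then show "f x = mzero B" using mhom_zero[OF D B f] by simp
    qed
  next
    case (Suc k)
    show ?case
    proof
      fix x assume x: "x \<in> mcarrier (dpow A (Suc k))"
      have km: "k < m" using Suc.prems by simp
      have zc: "zap A k x \<in> mcarrier (dpow A m)" using dpow_mono[OF A, of k m] zap_carr[OF A x] km by simp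
      have xk: "x k \<in> mcarrier A" using dpow_carr_all[OF A x] .
      have sc: "single A k (x k) \<in> mcarrier (dpow A m)" using single_carr[OF A xk km] .
      have h: "mhom R A B (\<lambda>a. f (single A k a))" unfolding mhom_def
      proof (intro conjI ballI)
        show "(\<lambda>a. f (single A k a)) \<in> mcarrier A \<rightarrow> mcarrier B"
          using mhom_closed[OF f] single_carr[OF A _ km] by auto
      next
        fix a b assume a: "a \<in> mcarrier A" and b: "b \<in> mcarrier A"
        show "f (single A k (madd A a b)) = madd B (f (single A k a)) (f (single A k b))"
          using mhom_add[OF f single_carr[OF A a km] single_carr[OF A b km]] single_add[OF A, of m k a b] by simp
      next
        fix a r assume a: "a \<in> mcarrier A" and r: "r \<in> carrier R"
        show "f (single A k (msmult A a r)) = msmult B (f (single A k a)) r"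
          using mhom_smult[OF f single_carr[OF A a km] r] single_smult[OF A r, of m k a] by simp
      qed
      have "f x = f (madd (dpow A m) (zap A k x) (single A k (x k)))" using decomp[OF A x, of m k] by simp
      also have "\<dots> = madd B (f (zap A k x)) (f (single A k (x k)))" using mhom_add[OF f zc sc] .
      also have "\<dots> = madd B (mzero B) (mzero B)"
        using Suc.IH km zap_carr[OF A x] H h xk unfolding hz_def by simp
      finally show "f x = mzero B" using rm_zero_zero[OF B] by simp
    qed
  qed
  then show "\<forall>x\<in>mcarrier (dpow A m). f x = mzero B" by blast
qed



lemma ss_dpow:
  assumes S: "simple_module R P"
  shows "ssm R (dpow P N)"
  unfolding ssm_def
proof (intro allI impI)
  fix T assume T: "submodule R (dpow P N) T"
  have P: "right_module R P" using S by (simp add: simple_module_def)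
  have Psimp: "\<And>U. submodule R P U \<Longrightarrow> U = {mzero P} \<or> U = mcarrier P" using S by (simp add: simple_module_def)
  define D where "D = dpow P N"
  have D: "right_module R D" unfolding D_def using rm_dpow[OF P] .
  have T': "submodule R D T" using T unfolding D_def .
  have "\<exists>W. submodule R D W \<and> T \<inter> W = {mzero D} \<and> (\<forall>x\<in>mcarrier (dpow P m). \<exists>t\<in>T. \<exists>w\<in>W. x = madd D t w)"
    if "m \<le> N" for m
    using that
  proof (induction m)
    case 0
    have W0: "submodule R D {mzero D}" unfolding submodule_def
      using rm_zero[OF D] rm_zero_zero[OF D] rm_zero_smult[OF D] by auto
    moreover have "T \<inter> {mzero D} = {mzero D}" using sub_zero[OF T'] by auto
    moreover have "\<forall>x\<in>mcarrier (dpow P 0). \<exists>t\<in>T. \<exists>w\<in>{mzero D}. x = madd D t w"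
    proof
      fix x assume "x \<in> mcarrier (dpow P 0)"
      then have "x = mzero D" unfolding dpow_carr D_def by auto
      then show "\<exists>t\<in>T. \<exists>w\<in>{mzero D}. x = madd D t w" using sub_zero[OF T'] rm_zero_zero[OF D]
        by (intro bexI[where x="mzero D"]) auto
    qed
    ultimately show ?case by blast
  next
    case (Suc m)
    have mN: "m < N" using Suc.prems by simp
    obtain W where W: "submodule R D W" "T \<inter> W = {mzero D}"
      "\<forall>x\<in>mcarrier (dpow P m). \<exists>t\<in>T. \<exists>w\<in>W. x = madd D t w"
      using Suc.IH Suc.prems by auto
    have sc: "\<And>a. a \<in> mcarrier P \<Longrightarrow> single P m a \<in> mcarrier D" unfolding D_def using single_carr[OF P _ mN] .
    have Tc: "\<And>t. t \<in> T \<Longrightarrow> t \<in> mcarrier D" using sub_carr[OF T'] .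
    have Wc: "\<And>t. t \<in> W \<Longrightarrow> t \<in> mcarrier D" using sub_carr[OF W(1)] .
    have sadd: "\<And>a b. madd D (single P m a) (single P m b) = single P m (madd P a b)"
      unfolding D_def using single_add[OF P] .
    have ssm: "\<And>a r. r \<in> carrier R \<Longrightarrow> msmult D (single P m a) r = single P m (msmult P a r)"
      unfolding D_def using single_smult[OF P] .
    have s0: "single P m (mzero P) = mzero D" unfolding D_def by (rule single_zero)
    define S where "S = {a \<in> mcarrier P. \<exists>t\<in>T. \<exists>w\<in>W. single P m a = madd D t w}"
    have Ss: "submodule R P S" unfolding submodule_def
    proof (intro conjI ballI)
      show "S \<subseteq> mcarrier P" by (auto simp: S_def)
      have "single P m (mzero P) = madd D (mzero D) (mzero D)" using s0 rm_zero_zero[OF D] by simp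
      then show "mzero P \<in> S" unfolding S_def using rm_zero[OF P] sub_zero[OF T'] sub_zero[OF W(1)] by blast
    next
      fix a b assume "a \<in> S" "b \<in> S"
      then obtain t1 w1 t2 w2 where a: "a \<in> mcarrier P" "t1 \<in> T" "w1 \<in> W" "single P m a = madd D t1 w1"
        and b: "b \<in> mcarrier P" "t2 \<in> T" "w2 \<in> W" "single P m b = madd D t2 w2"
        unfolding S_def by blast
      have "single P m (madd P a b) = madd D (single P m a) (single P m b)" using sadd by simp
      also have "\<dots> = madd D (madd D t1 w1) (madd D t2 w2)" using a(4) b(4) by simp
      also have "\<dots> = madd D (madd D t1 t2) (madd D w1 w2)" using rm_4[OF D Tc[OF a(2)] Wc[OF a(3)] Tc[OF b(2)] Wc[OF b(3)]] .
      finally show "madd P a b \<in> S" unfolding S_def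
        using rm_add[OF P a(1) b(1)] sub_add[OF T' a(2) b(2)] sub_add[OF W(1) a(3) b(3)] by blast
    next
      fix a r assume "a \<in> S" and r: "r \<in> carrier R"
      then obtain t w where a: "a \<in> mcarrier P" "t \<in> T" "w \<in> W" "single P m a = madd D t w"
        unfolding S_def by blast
      have "single P m (msmult P a r) = msmult D (single P m a) r" using ssm[OF r] by simp
      also have "\<dots> = msmult D (madd D t w) r" using a(4) by simp
      also have "\<dots> = madd D (msmult D t r) (msmult D w r)" using rm_sdistl[OF D Tc[OF a(2)] Wc[OF a(3)] r] .
      finally show "msmult P a r \<in> S" unfolding S_def
        using rm_smult[OF P a(1) r] sub_smult[OF T' a(2) r] sub_smult[OF W(1) a(3) r] by blast
    qed
    have dec: "\<And>x. x \<in> mcarrier (dpow P (Suc m)) \<Longrightarrow> x = madd D (zap P m x) (single P m (x m))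
        \<and> zap P m x \<in> mcarrier (dpow P m) \<and> x m \<in> mcarrier P"
      unfolding D_def using decomp[OF P] zap_carr[OF P] dpow_carr_all[OF P] by blast
    from Psimp[OF Ss] show ?case
    proof
      assume S0: "S = {mzero P}"
      define W' where "W' = {madd D w (single P m a) | w a. w \<in> W \<and> a \<in> mcarrier P}"
      have W's: "submodule R D W'" unfolding submodule_def
      proof (intro conjI ballI)
        show "W' \<subseteq> mcarrier D" unfolding W'_def using Wc sc rm_add[OF D] by blast
        have "mzero D = madd D (mzero D) (single P m (mzero P))" using s0 rm_zero_zero[OF D] by simp
        then show "mzero D \<in> W'" unfolding W'_def
          using sub_zero[OF W(1)] rm_zero[OF P] by blast
      next
        fix x y assume "x \<in> W'" "y \<in> W'"
        then obtain w1 a1 w2 a2 where x: "x = madd D w1 (single P m a1)" "w1 \<in> W" "a1 \<in> mcarrier P"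
          and y: "y = madd D w2 (single P m a2)" "w2 \<in> W" "a2 \<in> mcarrier P" unfolding W'_def by blast
        have "madd D x y = madd D (madd D w1 w2) (madd D (single P m a1) (single P m a2))"
          using x y rm_4[OF D Wc[OF x(2)] sc[OF x(3)] Wc[OF y(2)] sc[OF y(3)]] by simp
        also have "\<dots> = madd D (madd D w1 w2) (single P m (madd P a1 a2))" using sadd by simp
        finally show "madd D x y \<in> W'" unfolding W'_def
          using sub_add[OF W(1) x(2) y(2)] rm_add[OF P x(3) y(3)] by blast
      next
        fix x r assume "x \<in> W'" and r: "r \<in> carrier R"
        then obtain w a where x: "x = madd D w (single P m a)" "w \<in> W" "a \<in> mcarrier P" unfolding W'_def by blast
        have "msmult D x r = madd D (msmult D w r) (msmult D (single P m a) r)"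
          using x rm_sdistl[OF D Wc[OF x(2)] sc[OF x(3)] r] by simp
        also have "\<dots> = madd D (msmult D w r) (single P m (msmult P a r))" using ssm[OF r] by simp
        finally show "msmult D x r \<in> W'" unfolding W'_def
          using sub_smult[OF W(1) x(2) r] rm_smult[OF P x(3) r] by blast
      qed
      have "T \<inter> W' = {mzero D}"
      proof
        show "{mzero D} \<subseteq> T \<inter> W'" using sub_zero[OF T'] sub_zero[OF W's] by simp
        show "T \<inter> W' \<subseteq> {mzero D}"
        proof
          fix t assume "t \<in> T \<inter> W'"
          then obtain w a where t: "t \<in> T" and te: "t = madd D w (single P m a)" and w: "w \<in> W" and a: "a \<in> mcarrier P"
            unfolding W'_def by blast
          have wc: "w \<in> mcarrier D" using Wc[OF w] .
          have nw: "mneg R D w \<in> W" using sub_neg[OF W(1) D w] .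
          have nwc: "mneg R D w \<in> mcarrier D" using rm_neg_closed[OF D wc] .
          have "madd D t (mneg R D w) = madd D (madd D (single P m a) w) (mneg R D w)"
            using te rm_comm[OF D wc sc[OF a]] by simp
          also have "\<dots> = madd D (single P m a) (madd D w (mneg R D w))"
            using rm_assoc[OF D sc[OF a] wc nwc] .
          also have "\<dots> = single P m a" using rm_neg_r[OF D wc] rm_rzero[OF D sc[OF a]] by simp
          finally have "single P m a = madd D t (mneg R D w)" by simp
          then have "a \<in> S" unfolding S_def using a t nw by blast
          then have "a = mzero P" using S0 by simp
          then have "t = w" using te s0 rm_rzero[OF D wc] by simp
          then have "t \<in> T \<inter> W" using t w by simp
          then show "t \<in> {mzero D}" using W(2) by simp
        qed
      qed
      moreover have "\<forall>x\<in>mcarrier (dpow P (Suc m)). \<exists>t\<in>T. \<exists>w\<in>W'. x = madd D t w"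
      proof
        fix x assume x: "x \<in> mcarrier (dpow P (Suc m))"
        obtain t w where t: "t \<in> T" and w: "w \<in> W" and e: "zap P m x = madd D t w" using W(3) dec[OF x] by blast
        have "x = madd D (madd D t w) (single P m (x m))" using dec[OF x] e by simp
        also have "\<dots> = madd D t (madd D w (single P m (x m)))" using rm_assoc[OF D Tc[OF t] Wc[OF w] sc] dec[OF x] by simp
        finally show "\<exists>t\<in>T. \<exists>w\<in>W'. x = madd D t w" unfolding W'_def using t w dec[OF x] by blast
      qed
      ultimately show ?case using W's by blast
    next
      assume SP: "S = mcarrier P"
      have "\<forall>x\<in>mcarrier (dpow P (Suc m)). \<exists>t\<in>T. \<exists>w\<in>W. x = madd D t w"
      proof
        fix x assume x: "x \<in> mcarrier (dpow P (Suc m))"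
        obtain t w where t: "t \<in> T" and w: "w \<in> W" and e: "zap P m x = madd D t w" using W(3) dec[OF x] by blast
        obtain t2 w2 where t2: "t2 \<in> T" and w2: "w2 \<in> W" and e2: "single P m (x m) = madd D t2 w2"
          using dec[OF x] SP unfolding S_def by blast
        have "x = madd D (madd D t w) (madd D t2 w2)" using dec[OF x] e e2 by simp
        also have "\<dots> = madd D (madd D t t2) (madd D w w2)" using rm_4[OF D Tc[OF t] Wc[OF w] Tc[OF t2] Wc[OF w2]] .
        finally show "\<exists>t\<in>T. \<exists>w\<in>W. x = madd D t w" using sub_add[OF T' t t2] sub_add[OF W(1) w w2] by blast
      qed
      then show ?case using W by blast
    qed
  qed
  from this[of N] obtain W where W: "submodule R D W" "T \<inter> W = {mzero D}"
    "\<forall>x\<in>mcarrier (dpow P N). \<exists>t\<in>T. \<exists>w\<in>W. x = madd D t w" by auto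
  show "direct_summand R (dpow P N) T" unfolding direct_summand_def
    using T W unfolding D_def by blast
qed



lemma ar1: "(m::nat) < l * k \<Longrightarrow> m div l < k \<and> m mod l < l"
  by (metis less_mult_imp_div_less mod_less_divisor mult.commute mult_is_0 not_gr_zero not_less_zero)

lemma ar2: "(i::nat) < k \<Longrightarrow> j < l \<Longrightarrow> i * l + j < l * k \<and> (i * l + j) div l = i \<and> (i * l + j) mod l = j"
proof -
  assume i: "i < k" and j: "j < l"
  have "i * l + j < Suc i * l" using j by simp
  also have "\<dots> \<le> k * l" using i by (intro mult_le_mono1) simp
  finally have "i * l + j < l * k" by (simp add: mult.commute)
  moreover have "(i * l + j) div l = i" using j by simp
  moreover have "(i * l + j) mod l = j" using j by simp
  ultimately show ?thesis by simp
qed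

definition rf :: "('r, 'a) rmod \<Rightarrow> nat \<Rightarrow> nat \<Rightarrow> (nat \<Rightarrow> nat \<Rightarrow> 'a) \<Rightarrow> nat \<Rightarrow> 'a" where
  "rf M l k x = (\<lambda>m. if m < l * k then x (m div l) (m mod l) else mzero M)"

definition rg :: "('r, 'a) rmod \<Rightarrow> nat \<Rightarrow> nat \<Rightarrow> (nat \<Rightarrow> 'a) \<Rightarrow> nat \<Rightarrow> nat \<Rightarrow> 'a" where
  "rg M l k y = (\<lambda>i j. if i < k \<and> j < l then y (i * l + j) else mzero M)"

lemma dd_carr:
  assumes M: "right_module R M" and x: "x \<in> mcarrier (dpow (dpow M l) k)"
  shows "x i j \<in> mcarrier M" "i \<ge> k \<Longrightarrow> x i j = mzero M" "j \<ge> l \<Longrightarrow> x i j = mzero M"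
proof -
  have xi: "x i \<in> mcarrier (dpow M l)" using dpow_carr_all[OF rm_dpow[OF M] x] .
  show "x i j \<in> mcarrier M" using dpow_carr_all[OF M xi] .
  show "i \<ge> k \<Longrightarrow> x i j = mzero M" using x unfolding dpow_carr by simp
  show "j \<ge> l \<Longrightarrow> x i j = mzero M" using xi unfolding dpow_carr by simp
qed

lemma iso_reindex:
  assumes M: "right_module R M"
  shows "miso R (dpow (dpow M l) k) (dpow M (l * k)) (rf M l k) (rg M l k)"
proof -
  have z: "mzero M \<in> mcarrier M" using rm_zero[OF M] .
  have fc: "rf M l k x \<in> mcarrier (dpow M (l * k))" if x: "x \<in> mcarrier (dpow (dpow M l) k)" for x
    unfolding dpow_carr rf_def using dd_carr(1)[OF M x] by simp
  have gc: "rg M l k y \<in> mcarrier (dpow (dpow M l) k)" if y: "y \<in> mcarrier (dpow M (l * k))" for y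
    unfolding dpow_carr rg_def using dpow_carr_all[OF M y] z by (auto intro!: ext)
  have hf: "mhom R (dpow (dpow M l) k) (dpow M (l * k)) (rf M l k)" unfolding mhom_def
  proof (intro conjI ballI)
    show "rf M l k \<in> mcarrier (dpow (dpow M l) k) \<rightarrow> mcarrier (dpow M (l * k))" using fc by auto
  next
    fix x y assume "x \<in> mcarrier (dpow (dpow M l) k)" "y \<in> mcarrier (dpow (dpow M l) k)"
    show "rf M l k (madd (dpow (dpow M l) k) x y) = madd (dpow M (l * k)) (rf M l k x) (rf M l k y)"
      by (rule ext) (simp add: rf_def rm_zero_zero[OF M])
  next
    fix x r assume "x \<in> mcarrier (dpow (dpow M l) k)" "r \<in> carrier R"
    then show "rf M l k (msmult (dpow (dpow M l) k) x r) = msmult (dpow M (l * k)) (rf M l k x) r"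
      by (intro ext) (simp add: rf_def rm_zero_smult[OF M])
  qed
  have hg: "mhom R (dpow M (l * k)) (dpow (dpow M l) k) (rg M l k)" unfolding mhom_def
  proof (intro conjI ballI)
    show "rg M l k \<in> mcarrier (dpow M (l * k)) \<rightarrow> mcarrier (dpow (dpow M l) k)" using gc by auto
  next
    fix x y assume "x \<in> mcarrier (dpow M (l * k))" "y \<in> mcarrier (dpow M (l * k))"
    show "rg M l k (madd (dpow M (l * k)) x y) = madd (dpow (dpow M l) k) (rg M l k x) (rg M l k y)"
      by (intro ext) (simp add: rg_def rm_zero_zero[OF M])
  next
    fix x r assume "x \<in> mcarrier (dpow M (l * k))" "r \<in> carrier R"
    then show "rg M l k (msmult (dpow M (l * k)) x r) = msmult (dpow (dpow M l) k) (rg M l k x) r"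
      by (intro ext) (simp add: rg_def rm_zero_smult[OF M])
  qed
  have gf: "rg M l k (rf M l k x) = x" if x: "x \<in> mcarrier (dpow (dpow M l) k)" for x
  proof (intro ext)
    fix i j
    show "rg M l k (rf M l k x) i j = x i j"
    proof (cases "i < k \<and> j < l")
      case True
      then show ?thesis using ar2[of i k j l] by (simp add: rg_def rf_def)
    next
      case False
      then show ?thesis using dd_carr(2)[OF M x, where i=i and j=j] dd_carr(3)[OF M x, where i=i and j=j] by (auto simp: rg_def)
    qed
  qed
  have fg: "rf M l k (rg M l k y) = y" if y: "y \<in> mcarrier (dpow M (l * k))" for y
  proof (intro ext)
    fix m
    show "rf M l k (rg M l k y) m = y m"
    proof (cases "m < l * k")
      case True
      then show ?thesis using ar1[OF True] by (simp add: rg_def rf_def)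
    next
      case False
      then show ?thesis using y unfolding dpow_carr by (simp add: rf_def)
    qed
  qed
  show ?thesis unfolding miso_def using hf hg gf fg by blast
qed

definition uf :: "(nat \<Rightarrow> 'a \<times> 'c) \<Rightarrow> (nat \<Rightarrow> 'a) \<times> (nat \<Rightarrow> 'c)" where
  "uf x = (\<lambda>i. fst (x i), \<lambda>i. snd (x i))"

definition ug :: "(nat \<Rightarrow> 'a) \<times> (nat \<Rightarrow> 'c) \<Rightarrow> nat \<Rightarrow> 'a \<times> 'c" where
  "ug y = (\<lambda>i. (fst y i, snd y i))"

lemma iso_unzip:
  shows "miso R (dpow (dsum A B) k) (dsum (dpow A k) (dpow B k)) uf ug"
proof -
  have hf: "mhom R (dpow (dsum A B) k) (dsum (dpow A k) (dpow B k)) uf" unfolding mhom_def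
  proof (intro conjI ballI)
    show "uf \<in> mcarrier (dpow (dsum A B) k) \<rightarrow> mcarrier (dsum (dpow A k) (dpow B k))"
      unfolding uf_def by (auto simp: dsum_carr dpow_carr)
  next
    fix x y assume "x \<in> mcarrier (dpow (dsum A B) k)" "y \<in> mcarrier (dpow (dsum A B) k)"
    show "uf (madd (dpow (dsum A B) k) x y) = madd (dsum (dpow A k) (dpow B k)) (uf x) (uf y)"
      by (simp add: uf_def)
  next
    fix x r assume "x \<in> mcarrier (dpow (dsum A B) k)" "r \<in> carrier R"
    show "uf (msmult (dpow (dsum A B) k) x r) = msmult (dsum (dpow A k) (dpow B k)) (uf x) r"
      by (simp add: uf_def)
  qed
  have hg: "mhom R (dsum (dpow A k) (dpow B k)) (dpow (dsum A B) k) ug" unfolding mhom_def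
  proof (intro conjI ballI)
    show "ug \<in> mcarrier (dsum (dpow A k) (dpow B k)) \<rightarrow> mcarrier (dpow (dsum A B) k)"
      unfolding ug_def by (auto simp: dsum_carr dpow_carr)
  next
    fix x y assume "x \<in> mcarrier (dsum (dpow A k) (dpow B k))" "y \<in> mcarrier (dsum (dpow A k) (dpow B k))"
    show "ug (madd (dsum (dpow A k) (dpow B k)) x y) = madd (dpow (dsum A B) k) (ug x) (ug y)"
      by (simp add: ug_def)
  next
    fix x r assume "x \<in> mcarrier (dsum (dpow A k) (dpow B k))" "r \<in> carrier R"
    show "ug (msmult (dsum (dpow A k) (dpow B k)) x r) = msmult (dpow (dsum A B) k) (ug x) r"
      by (simp add: ug_def)
  qed
  show ?thesis unfolding miso_def using hf hg by (simp add: uf_def ug_def)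
qed

theorem mainTheorem18:
  fixes R :: "('r, 'b) ring_scheme" and M :: "('r, 'a) rmod" and P :: "('r, 'c) rmod" and l n :: nat
  assumes "right_module R M"
    and "finite_sigma_rickart R M"
    and "simple_module R P"
    and "\<forall>f. mhom R M P f \<longrightarrow> (\<forall>x\<in>mcarrier M. f x = mzero P)"
    and "l > 0" and "n > 0"
  shows "finite_sigma_rickart R (dsum (dpow M l) (dpow P n))"
  unfolding finite_sigma_rickart_def
proof (intro allI impI)
  fix k :: nat assume k: "k > 0"
  have M: "right_module R M" by fact
  have P: "right_module R P" using assms(3) by (simp add: simple_module_def)
  have Ml: "right_module R (dpow M l)" using rm_dpow[OF M] .
  have Pn: "right_module R (dpow P n)" using rm_dpow[OF P] .
  have Mlk: "right_module R (dpow (dpow M l) k)" using rm_dpow[OF Ml] .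
  have Pnk: "right_module R (dpow (dpow P n) k)" using rm_dpow[OF Pn] .
  have r1: "rickart R (dpow M (l * k))" using assms(2) assms(5) k by (simp add: finite_sigma_rickart_def)
  have r2: "rickart R (dpow (dpow M l) k)"
    using iso_rickart[OF Mlk rm_dpow[OF M] iso_reindex[OF M] r1] .
  have s2: "ssm R (dpow (dpow P n) k)"
    using iso_ssm[OF Pnk rm_dpow[OF P] iso_reindex[OF P] ss_dpow[OF assms(3)]] .
  have h0: "hz R M P" using assms(4) by (simp add: hz_def)
  have h1: "hz R M (dpow (dpow P n) k)" using hz_right[OF M Pn hz_right[OF M P h0]] .
  have h2: "hz R (dpow (dpow M l) k) (dpow (dpow P n) k)" using hz_left[OF Ml Pnk hz_left[OF M Pnk h1]] .
  have r3: "rickart R (dsum (dpow (dpow M l) k) (dpow (dpow P n) k))"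
    using main_D[OF Mlk Pnk r2 s2] h2 by (simp add: hz_def)
  show "rickart R (dpow (dsum (dpow M l) (dpow P n)) k)"
    using iso_rickart[OF rm_dpow[OF rm_dsum[OF Ml Pn]] rm_dsum[OF Mlk Pnk] iso_unzip r3] .
qed


end
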